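(* Let $P$ be the Borel probability measure on $\mathbb{R}$ with density $f(x)=(3/2)^n$ if $x\in J_n:=[1-\frac{1}{3^{n-1}},1-\frac{2}{3^n}]$ for some $n\in\mathbb{N}$, and $f(x)=0$ otherwise. Let $\alpha=\{a_1,a_2,a_3\}$ be an optimal set of three-means for $P$ with $a_1<a_2<a_3$. Then $a_1=\frac16$, $a_2=\frac{13}{18}$, $a_3=\frac{17}{18}$, and the corresponding quantization error is $V_3=\frac{29}{5508}$.
   Context: $\mathbb{N}=\{1,2,\dots\}$. For $n\in\mathbb{N}$, the $n$th quantization error of $P$ is $V_n=\inf\{\int\min_{a\in\alpha}(x-a)^2\,dP(x):\alpha\subset\mathbb{R},\ \mathrm{card}(\alpha)\le n\}$, and an optimal set of $n$-means is a set $\alpha$ with $\mathrm{card}(\alpha)\le n$ attaining this infimum. *)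

theory Defs
  imports "HOL-Analysis.Analysis"
begin

definition J :: "nat \<Rightarrow> real set" where
  "J n = {1 - 1 / 3 ^ (n - 1) .. 1 - 2 / 3 ^ n}"

definition dens :: "real \<Rightarrow> real" where
  "dens x = (if \<exists>n\<ge>1. x \<in> J n
             then (3/2) ^ (LEAST n. n \<ge> 1 \<and> x \<in> J n) else 0)"

definition P :: "real measure" where
  "P = density lborel (\<lambda>x. ennreal (dens x))"

definition distortion :: "real measure \<Rightarrow> real set \<Rightarrow> real" where
  "distortion M \<alpha> = (\<integral>x. Min ((\<lambda>a. (x - a)\<^sup>2) ` \<alpha>) \<partial>M)"

definition quant_error :: "real measure \<Rightarrow> nat \<Rightarrow> real" where
  "quant_error M n = Inf {distortion M \<alpha> | \<alpha>. finite \<alpha> \<and> \<alpha> \<noteq> {} \<and> card \<alpha> \<le> n}"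

definition optimal_set :: "real measure \<Rightarrow> nat \<Rightarrow> real set \<Rightarrow> bool" where
  "optimal_set M n \<alpha> \<longleftrightarrow> finite \<alpha> \<and> \<alpha> \<noteq> {} \<and> card \<alpha> \<le> n
      \<and> distortion M \<alpha> = quant_error M n"

end

theory Submission
  imports Defs
begin


lemma J_eq: assumes "n \<ge> 1" shows "J n = {1 - 3 / 3^n .. 1 - 2 / 3^n}"
proof -
  obtain k where "n = Suc k" using assms by (cases n) auto
  then show ?thesis by (simp add: J_def)
qed

lemma J_disj: assumes "1 \<le> n" "n < m" shows "J n \<inter> J m = {}"
proof -
  have "(3::real)^(Suc n) \<le> 3^m" using assms by (intro power_increasing) auto
  hence "3 / 3^m \<le> (1::real) / 3^n" by (simp add: field_simps)
  moreover have "(1::real) / 3^n < 2 / 3^n" by (simp add: divide_strict_right_mono)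
  ultimately have "1 - 2/3^n < 1 - 3/(3::real)^m" by linarith
  then show ?thesis using J_eq[of n] J_eq[of m] assms by auto
qed

lemma disj_K: "disjoint_family (\<lambda>k. J (Suc k))"
  unfolding disjoint_family_on_def
proof (intro ballI impI)
  fix m n :: nat assume "m \<noteq> n"
  then show "J (Suc m) \<inter> J (Suc n) = {}"
    using J_disj[of "Suc m" "Suc n"] J_disj[of "Suc n" "Suc m"] by (cases "m < n") auto
qed

lemma dens_in: assumes "x \<in> J (Suc k)" shows "dens x = (3/2)^(Suc k)"
proof -
  have L: "(LEAST n. n \<ge> 1 \<and> x \<in> J n) = Suc k"
  proof (rule Least_equality)
    show "1 \<le> Suc k \<and> x \<in> J (Suc k)" using assms by simp
  next
    fix y assume "1 \<le> y \<and> x \<in> J y"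
    then show "Suc k \<le> y" using J_disj[of y "Suc k"] assms by (metis IntI empty_iff not_le)
  qed
  show ?thesis unfolding dens_def using assms L by auto
qed

lemma dens_out: assumes "\<And>k. x \<notin> J (Suc k)" shows "dens x = 0"
proof -
  have "\<not> (\<exists>n\<ge>1. x \<in> J n)"
  proof
    assume "\<exists>n\<ge>1. x \<in> J n"
    then obtain n where "n \<ge> 1" "x \<in> J n" by auto
    then show False using assms[of "n - 1"] by simp
  qed
  then show ?thesis unfolding dens_def by simp
qed

lemma dens_repr: "ennreal (dens x) = (\<Sum>k. ennreal ((3/2)^(Suc k)) * indicator (J (Suc k)) x)"
proof (cases "\<exists>k. x \<in> J (Suc k)")
  case True
  then obtain k where k: "x \<in> J (Suc k)" by auto
  have "(\<Sum>n. ennreal ((3/2)^(Suc n)) * indicator (J (Suc n)) x) = ennreal ((3/2)^(Suc k))"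
    by (rule suminf_cmult_indicator[OF disj_K k])
  then show ?thesis using dens_in[OF k] by metis
next
  case False
  then show ?thesis using dens_out[of x] by simp
qed

lemma J_borel[measurable]: "J n \<in> sets borel"
  by (simp add: J_def)

lemma dens_meas[measurable]: "(\<lambda>x. ennreal (dens x)) \<in> borel_measurable borel"
  by (subst dens_repr) measurable

lemma P_decomp:
  assumes [measurable]: "G \<in> borel_measurable borel"
  shows "(\<integral>\<^sup>+x. G x \<partial>P) = (\<Sum>k. ennreal ((3/2)^(Suc k)) * (\<integral>\<^sup>+x. indicator (J (Suc k)) x * G x \<partial>lborel))"
proof -
  have "(\<integral>\<^sup>+x. G x \<partial>P) = (\<integral>\<^sup>+x. ennreal (dens x) * G x \<partial>lborel)"
    unfolding P_def by (rule nn_integral_density) auto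
  also have "\<dots> = (\<integral>\<^sup>+x. (\<Sum>k. ennreal ((3/2)^(Suc k)) * (indicator (J (Suc k)) x * G x)) \<partial>lborel)"
    by (subst dens_repr) (simp flip: mult.assoc)
  also have "\<dots> = (\<Sum>k. (\<integral>\<^sup>+x. ennreal ((3/2)^(Suc k)) * (indicator (J (Suc k)) x * G x) \<partial>lborel))"
    by (rule nn_integral_suminf) measurable
  also have "\<dots> = (\<Sum>k. ennreal ((3/2)^(Suc k)) * (\<integral>\<^sup>+x. indicator (J (Suc k)) x * G x \<partial>lborel))"
    by (subst nn_integral_cmult) auto
  finally show ?thesis .
qed




definition IJ :: "nat \<Rightarrow> (real \<Rightarrow> ennreal) \<Rightarrow> ennreal" where
  "IJ n G = (\<integral>\<^sup>+x. indicator (J n) x * G x \<partial>lborel)"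

definition CI :: "(real \<Rightarrow> ennreal) \<Rightarrow> ennreal" where
  "CI G = (\<Sum>k. ennreal ((3/2)^(k+3)) * IJ (k+3) G)"

lemma P_decomp3:
  assumes [measurable]: "G \<in> borel_measurable borel"
  shows "(\<integral>\<^sup>+x. G x \<partial>P) = ennreal (3/2) * IJ 1 G + ennreal (9/4) * IJ 2 G + CI G"
proof -
  let ?f = "\<lambda>k. ennreal ((3/2)^(Suc k)) * IJ (Suc k) G"
  have "(\<integral>\<^sup>+x. G x \<partial>P) = suminf ?f" unfolding P_decomp[OF assms] IJ_def ..
  also have "\<dots> = (\<Sum>j. ?f (j + 2)) + (\<Sum>j<2. ?f j)" by (rule suminf_offset) simp
  also have "(\<Sum>j. ?f (j + 2)) = CI G" unfolding CI_def by (intro arg_cong[where f=suminf] ext) (simp add: eval_nat_numeral)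
  also have "(\<Sum>j<2. ?f j) = ennreal (3/2) * IJ 1 G + ennreal (9/4) * IJ 2 G"
    by (simp add: numeral_2_eq_2 power2_eq_square)
  finally show ?thesis by (simp add: ac_simps)
qed

lemma J1: "J 1 = {0..1/3}" by (simp add: J_def)
lemma J2: "J 2 = {2/3..7/9}" by (simp add: J_def)
lemma J3sub: "J (k+3) \<subseteq> {8/9..1}"
proof -
  have e: "J (k+3) = {1 - 3/3^(k+3) .. 1 - 2/3^(k+3)}" by (rule J_eq) simp
  have "(27::real) \<le> 3^(k+3)" using power_increasing[of 3 "k+3" "3::real"] by simp
  hence "3/3^(k+3) \<le> (1/9::real)" by (simp add: field_simps)
  moreover have "0 \<le> 2/(3::real)^(k+3)" by simp
  ultimately show ?thesis unfolding e by auto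
qed

lemma int_sq:
  fixes l r a :: real assumes "l \<le> r"
  shows "(\<integral>\<^sup>+x. indicator {l..r} x * ennreal ((x-a)^2) \<partial>lborel) = ennreal (((r-a)^3 - (l-a)^3)/3)"
proof -
  have "(\<integral>\<^sup>+x. ennreal ((x-a)^2) * indicator {l..r} x \<partial>lborel) = (\<lambda>x. (x-a)^3/3) r - (\<lambda>x. (x-a)^3/3) l"
    by (rule nn_integral_FTC_Icc) (auto intro!: derivative_eq_intros simp: assms power2_eq_square)
  then show ?thesis by (simp add: mult.commute diff_divide_distrib)
qed

lemma int_const:
  fixes l r k :: real assumes "l \<le> r" "0 \<le> k"
  shows "(\<integral>\<^sup>+x. indicator {l..r} x * ennreal k \<partial>lborel) = ennreal (k * (r - l))"
  using assms by (simp add: nn_integral_cmult_indicator mult.commute ennreal_mult)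

lemma lb_sq:
  fixes l r a :: real assumes "l \<le> r" "\<And>x. l \<le> x \<Longrightarrow> x \<le> r \<Longrightarrow> (x-a)^2 \<le> f x"
  shows "ennreal (((r-a)^3 - (l-a)^3)/3) \<le> (\<integral>\<^sup>+x. indicator {l..r} x * ennreal (f x) \<partial>lborel)"
  unfolding int_sq[OF assms(1), symmetric]
  by (intro nn_integral_mono) (auto simp: indicator_def assms(2) intro!: ennreal_leI)

lemma lb_const:
  fixes l r k :: real assumes "l \<le> r" "0 \<le> k" "\<And>x. l \<le> x \<Longrightarrow> x \<le> r \<Longrightarrow> k \<le> f x"
  shows "ennreal (k * (r - l)) \<le> (\<integral>\<^sup>+x. indicator {l..r} x * ennreal (f x) \<partial>lborel)"
  unfolding int_const[OF assms(1,2), symmetric]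
  by (intro nn_integral_mono) (auto simp: indicator_def assms(3) intro!: ennreal_leI)

lemma split_int:
  fixes l m r :: real
  assumes "l \<le> m" "m \<le> r" and [measurable]: "G \<in> borel_measurable borel"
  shows "(\<integral>\<^sup>+x. indicator {l..r} x * G x \<partial>lborel) =
     (\<integral>\<^sup>+x. indicator {l..m} x * G x \<partial>lborel) + (\<integral>\<^sup>+x. indicator {m..r} x * G x \<partial>lborel)"
proof -
  have "(\<integral>\<^sup>+x. indicator {l..r} x * G x \<partial>lborel) =
     (\<integral>\<^sup>+x. indicator {l..m} x * G x + indicator {m..r} x * G x \<partial>lborel)"
  proof (rule nn_integral_cong_AE)
    show "AE x in lborel. indicator {l..r} x * G x = indicator {l..m} x * G x + indicator {m..r} x * G x"
      using AE_lborel_singleton[of m]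
      by eventually_elim (use assms in \<open>auto simp: indicator_def\<close>)
  qed
  also have "\<dots> = (\<integral>\<^sup>+x. indicator {l..m} x * G x \<partial>lborel) + (\<integral>\<^sup>+x. indicator {m..r} x * G x \<partial>lborel)"
    by (rule nn_integral_add) auto
  finally show ?thesis .
qed




lemma geo3: fixes c :: real assumes "\<bar>c\<bar> < 1" shows "(\<lambda>k. c^(k+3)) sums (c^3 / (1 - c))"
proof -
  have "(\<lambda>k. c^3 * c^k) sums (c^3 * (1 / (1 - c)))"
    by (rule sums_mult) (rule geometric_sums, use assms in simp)
  then show ?thesis by (simp add: power_add mult.commute)
qed

lemma Tterm:
  fixes a :: real and n :: nat
  defines "t \<equiv> (1/3::real)^n"
  shows "(3/2)^n * ((((1 - 2*t) - a)^3 - ((1 - 3*t) - a)^3)/3)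
     = (1-a)^2 * (1/2)^n - 5*(1-a) * (1/6)^n + (19/3) * (1/18)^n"
proof -
  have h1: "(3/2::real)^n * t = (1/2)^n" unfolding t_def by (simp add: power_mult_distrib[symmetric])
  have h2: "(3/2::real)^n * t^2 = (1/6)^n" unfolding t_def
    by (simp add: power_mult_distrib[symmetric] power2_eq_square)
  have h3: "(3/2::real)^n * t^3 = (1/18)^n" unfolding t_def
    by (simp add: power_mult_distrib[symmetric] power3_eq_cube)
  have eq: "(((1 - 2*t) - a)^3 - ((1 - 3*t) - a)^3)/3 = (1-a)^2 * t - 5*(1-a)*t^2 + (19/3)*t^3"
    by (simp add: power2_eq_square power3_eq_cube field_simps)
  have "(3/2)^n * ((1-a)^2 * t - 5*(1-a)*t^2 + (19/3)*t^3)
     = (1-a)^2 * ((3/2)^n * t) - 5*(1-a)*((3/2)^n*t^2) + (19/3)*((3/2)^n*t^3)"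
    by (simp add: algebra_simps)
  then show ?thesis unfolding eq h1 h2 h3 .
qed

lemma CI_sq: "CI (\<lambda>x. ennreal ((x-a)^2)) = ennreal (25/66096 + (a-17/18)^2/4)"
proof -
  define T where "T k = (1-a)^2 * (1/2)^(k+3) - 5*(1-a) * (1/6)^(k+3) + (19/3) * (1/18)^(k+3::nat)" for k
  have termk: "ennreal ((3/2)^(k+3)) * IJ (k+3) (\<lambda>x. ennreal ((x-a)^2)) = ennreal (T k)" for k
  proof -
    define t where "t = (1/3::real)^(k+3)"
    have t3: "3 / 3^(k+3) = 3*t" "2 / 3^(k+3) = 2*t" unfolding t_def by (simp_all add: power_one_over)
    have tpos: "0 \<le> t" unfolding t_def by simp
    have e: "J (k+3) = {1 - 3*t .. 1 - 2*t}" using J_eq[of "k+3"] t3 by simp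
    have Y: "IJ (k+3) (\<lambda>x. ennreal ((x-a)^2)) = ennreal ((((1 - 2*t) - a)^3 - ((1 - 3*t) - a)^3)/3)"
      unfolding IJ_def e by (rule int_sq) (use tpos in simp)
    have Ynn: "0 \<le> (((1 - 2*t) - a)^3 - ((1 - 3*t) - a)^3)/3"
      using power_mono_odd[of 3 "(1 - 3*t) - a" "(1 - 2*t) - a"] tpos by simp
    have "(3/2)^(k+3) * ((((1 - 2*t) - a)^3 - ((1 - 3*t) - a)^3)/3) = T k"
      unfolding T_def t_def by (rule Tterm)
    then show ?thesis unfolding Y using Ynn
      by (simp add: ennreal_mult[symmetric])
  qed
  have s1: "(\<lambda>k. (1/2::real)^(k+3)) sums ((1/2)^3 / (1 - 1/2))" by (rule geo3) simp
  have s2: "(\<lambda>k. (1/6::real)^(k+3)) sums ((1/6)^3 / (1 - 1/6))" by (rule geo3) simp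
  have s3: "(\<lambda>k. (1/18::real)^(k+3)) sums ((1/18)^3 / (1 - 1/18))" by (rule geo3) simp
  have "T sums ((1-a)^2 * ((1/2)^3 / (1 - 1/2)) - 5*(1-a) * ((1/6)^3 / (1 - 1/6)) + (19/3) * ((1/18)^3 / (1 - 1/18)))"
    unfolding T_def by (intro sums_add sums_diff sums_mult s1 s2 s3)
  moreover have "(1-a)^2 * ((1/2)^3 / (1 - 1/2)) - 5*(1-a) * ((1/6)^3 / (1 - 1/6)) + (19/3) * ((1/18)^3 / (1 - 1/18))
     = 25/66096 + (a-17/18)^2/4"
    by (simp add: power2_eq_square power3_eq_cube field_simps)
  ultimately have Ts: "T sums (25/66096 + (a-17/18)^2/4)" by simp
  have Tnn: "0 \<le> T k" for k
  proof -
    have d: "0 \<le> (((1 - 2*(1/3::real)^(k+3)) - a)^3 - ((1 - 3*(1/3)^(k+3)) - a)^3)/3"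
      using power_mono_odd[of 3 "(1 - 3*(1/3::real)^(k+3)) - a" "(1 - 2*(1/3)^(k+3)) - a"] by simp
    have "T k = (3/2)^(k+3) * ((((1 - 2*(1/3)^(k+3)) - a)^3 - ((1 - 3*(1/3)^(k+3)) - a)^3)/3)"
      unfolding T_def using Tterm[of "k+3" a] by simp
    then show ?thesis using d by (metis mult_nonneg_nonneg zero_le_power zero_le_divide_iff zero_le_numeral)
  qed
  have "CI (\<lambda>x. ennreal ((x-a)^2)) = (\<Sum>k. ennreal (T k))" unfolding CI_def termk ..
  also have "\<dots> = ennreal (\<Sum>k. T k)" by (rule suminf_ennreal2[OF Tnn sums_summable[OF Ts]])
  also have "(\<Sum>k. T k) = 25/66096 + (a-17/18)^2/4" using Ts by (rule sums_unique[symmetric])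
  finally show ?thesis .
qed

lemma CI_mono:
  assumes "\<And>x. 8/9 \<le> x \<Longrightarrow> x \<le> 1 \<Longrightarrow> G x \<le> H x"
  shows "CI G \<le> CI H"
  unfolding CI_def
proof (intro suminf_le allI mult_left_mono)
  fix k
  show "IJ (k+3) G \<le> IJ (k+3) H" unfolding IJ_def
    by (intro nn_integral_mono) (use J3sub[of k] assms in \<open>auto simp: indicator_def\<close>)
qed auto

lemma CI_lb:
  assumes "\<And>x. 8/9 \<le> x \<Longrightarrow> x \<le> 1 \<Longrightarrow> (x-a)^2 \<le> f x"
  shows "ennreal (25/66096 + (a-17/18)^2/4) \<le> CI (\<lambda>x. ennreal (f x))"
  unfolding CI_sq[symmetric] by (rule CI_mono) (use assms in \<open>auto intro: ennreal_leI\<close>)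




definition F3 :: "real \<Rightarrow> real \<Rightarrow> real \<Rightarrow> real \<Rightarrow> real" where
  "F3 a1 a2 a3 x = min ((x-a1)^2) (min ((x-a2)^2) ((x-a3)^2))"

lemma F3_nonneg: "0 \<le> F3 a1 a2 a3 x" unfolding F3_def by simp

lemma F3_meas[measurable]: "(\<lambda>x. F3 a1 a2 a3 x) \<in> borel_measurable borel"
  unfolding F3_def by measurable

lemma Min3: "Min ((\<lambda>a. (x-a)^2) ` {a1,a2,a3}) = F3 a1 a2 a3 (x::real)"
  unfolding F3_def by simp

lemma J_sub01: assumes "n \<ge> 1" shows "J n \<subseteq> {0..1}"
proof -
  have "(3::real) \<le> 3^n" using assms power_increasing[of 1 n "3::real"] by simp
  hence "3 / 3^n \<le> (1::real)" by simp
  moreover have "0 \<le> 2/(3::real)^n" by simp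
  ultimately show ?thesis using J_eq[OF assms] by auto
qed

lemma J_len: assumes "n \<ge> 1" shows "J n = {1 - 3 / 3^n .. 1 - 2 / 3^n}" "(1 - 2 / 3^n) - (1 - 3 / 3^n) = (1/3::real)^n"
  using J_eq[OF assms] by (simp_all add: power_one_over)

lemma P_bounded:
  fixes f :: "real \<Rightarrow> real" and K :: real
  assumes [measurable]: "f \<in> borel_measurable borel" and K: "0 \<le> K" and fK: "\<And>x. 0 \<le> x \<Longrightarrow> x \<le> 1 \<Longrightarrow> f x \<le> K"
  shows "(\<integral>\<^sup>+x. ennreal (f x) \<partial>P) \<le> ennreal K"
proof -
  have t: "ennreal ((3/2)^(Suc k)) * (\<integral>\<^sup>+x. indicator (J (Suc k)) x * ennreal (f x) \<partial>lborel)
      \<le> ennreal (K * (1/2)^(Suc k))" for k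
  proof -
    have "(\<integral>\<^sup>+x. indicator (J (Suc k)) x * ennreal (f x) \<partial>lborel) \<le> (\<integral>\<^sup>+x. indicator (J (Suc k)) x * ennreal K \<partial>lborel)"
      by (intro nn_integral_mono) (use J_sub01[of "Suc k"] fK in \<open>auto simp: indicator_def intro!: ennreal_leI\<close>)
    also have "\<dots> = ennreal (K * (1/3)^(Suc k))"
    proof -
      have e: "J (Suc k) = {1 - 3 / 3^(Suc k) .. 1 - 2 / 3^(Suc k)}" by (rule J_len(1)) simp
      have l: "(1 - 2 / 3^(Suc k)) - (1 - 3 / 3^(Suc k)) = (1/3::real)^(Suc k)" by (rule J_len(2)) simp
      have le: "1 - 3 / 3^(Suc k) \<le> (1::real) - 2 / 3^(Suc k)" using l zero_le_power[of "1/3::real" "Suc k"] by linarith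
      show ?thesis unfolding e int_const[OF le K] l ..
    qed
    finally have "ennreal ((3/2)^(Suc k)) * (\<integral>\<^sup>+x. indicator (J (Suc k)) x * ennreal (f x) \<partial>lborel)
        \<le> ennreal ((3/2)^(Suc k)) * ennreal (K * (1/3)^(Suc k))" by (rule mult_left_mono) simp
    also have "\<dots> = ennreal (K * (1/2)^(Suc k))"
    proof -
      have h: "(3/2::real)^(Suc k) * (1/3)^(Suc k) = (1/2)^(Suc k)"
        by (simp only: power_mult_distrib[symmetric]) simp
      have "(3/2::real)^(Suc k) * (K * (1/3)^(Suc k)) = K * (1/2)^(Suc k)"
        using h by (metis mult.left_commute)
      then show ?thesis using K by (simp add: ennreal_mult[symmetric] del: power_Suc)
    qed
    finally show ?thesis .
  qed
  have s0: "(\<lambda>k. (1/2::real)^(Suc k)) sums 1"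
    using sums_divide[OF geometric_sums[of "1/2::real"], of 2] by simp
  have s: "(\<lambda>k. K * (1/2::real)^(Suc k)) sums (K * 1)"
    by (rule sums_mult[OF s0])
  have "(\<integral>\<^sup>+x. ennreal (f x) \<partial>P) \<le> (\<Sum>k. ennreal (K * (1/2)^(Suc k)))"
    unfolding P_decomp[of "\<lambda>x. ennreal (f x)", OF measurable_compose[OF assms(1) measurable_ennreal]]
    by (intro suminf_le allI t) auto
  also have "\<dots> = ennreal (\<Sum>k. K * (1/2)^(Suc k))"
    by (rule suminf_ennreal2) (use K sums_summable[OF s] in auto)
  also have "(\<Sum>k. K * (1/2::real)^(Suc k)) = K" using sums_unique[OF s] by simp
  finally show ?thesis .
qed

lemma int_F3: "integrable P (\<lambda>x. F3 a1 a2 a3 x)"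
proof (rule integrableI_nonneg)
  have sP: "sets P = sets borel" unfolding P_def by simp
  show "(\<lambda>x. F3 a1 a2 a3 x) \<in> borel_measurable P" unfolding measurable_cong_sets[OF sP refl] by (rule F3_meas)
  show "AE x in P. 0 \<le> F3 a1 a2 a3 x" by (rule AE_I2) (rule F3_nonneg)
  have "(\<integral>\<^sup>+x. ennreal (F3 a1 a2 a3 x) \<partial>P) \<le> ennreal ((\<bar>a1\<bar>+1)^2)"
  proof (rule P_bounded)
    fix x :: real assume "0 \<le> x" "x \<le> 1"
    then have "\<bar>x - a1\<bar> \<le> \<bar>a1\<bar> + 1" by auto
    then have "(x-a1)^2 \<le> (\<bar>a1\<bar>+1)^2" by (metis abs_ge_zero power2_abs power_mono)
    then show "F3 a1 a2 a3 x \<le> (\<bar>a1\<bar>+1)^2" unfolding F3_def by linarith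
  qed auto
  then show "(\<integral>\<^sup>+x. ennreal (F3 a1 a2 a3 x) \<partial>P) < \<infinity>" by (rule le_less_trans) simp
qed

lemma dist3: "distortion P {a1,a2,a3} = (\<integral>x. F3 a1 a2 a3 x \<partial>P)"
  unfolding distortion_def Min3 ..

lemma dist3_enn: "ennreal (distortion P {a1,a2,a3}) =
   ennreal (3/2) * IJ 1 (\<lambda>x. ennreal (F3 a1 a2 a3 x)) + ennreal (9/4) * IJ 2 (\<lambda>x. ennreal (F3 a1 a2 a3 x))
   + CI (\<lambda>x. ennreal (F3 a1 a2 a3 x))"
proof -
  have "ennreal (distortion P {a1,a2,a3}) = (\<integral>\<^sup>+x. ennreal (F3 a1 a2 a3 x) \<partial>P)"
    unfolding dist3 by (rule nn_integral_eq_integral[symmetric, OF int_F3 AE_I2[OF F3_nonneg]])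
  also have "\<dots> = ennreal (3/2) * IJ 1 (\<lambda>x. ennreal (F3 a1 a2 a3 x)) + ennreal (9/4) * IJ 2 (\<lambda>x. ennreal (F3 a1 a2 a3 x))
   + CI (\<lambda>x. ennreal (F3 a1 a2 a3 x))" by (rule P_decomp3) measurable
  finally show ?thesis .
qed

lemma dist_nonneg: assumes "finite \<alpha>" "\<alpha> \<noteq> {}" shows "0 \<le> distortion M \<alpha>"
  unfolding distortion_def
proof (rule integral_nonneg_AE, rule AE_I2)
  fix x :: real
  show "0 \<le> Min ((\<lambda>a. (x - a)\<^sup>2) ` \<alpha>)"
    by (rule Min.boundedI) (use assms in auto)
qed

lemma qe_le: assumes "finite \<alpha>" "\<alpha> \<noteq> {}" "card \<alpha> \<le> n" shows "quant_error M n \<le> distortion M \<alpha>"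
  unfolding quant_error_def
proof (rule cInf_lower)
  show "distortion M \<alpha> \<in> {distortion M \<alpha> |\<alpha>. finite \<alpha> \<and> \<alpha> \<noteq> {} \<and> card \<alpha> \<le> n}"
    using assms by blast
  show "bdd_below {distortion M \<alpha> |\<alpha>. finite \<alpha> \<and> \<alpha> \<noteq> {} \<and> card \<alpha> \<le> n}"
    by (rule bdd_belowI[where m=0]) (auto intro: dist_nonneg)
qed




lemma closer: fixes a b x :: real assumes "a \<le> b" "(a+b)/2 \<le> x" shows "(x-b)^2 \<le> (x-a)^2"
proof -
  have "(x-a)^2 - (x-b)^2 = (b-a)*(2*x-a-b)" by (simp add: power2_eq_square algebra_simps)
  moreover have "0 \<le> (b-a)*(2*x-a-b)" using assms by simp
  ultimately show ?thesis by simp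
qed

lemma closer': fixes a b x :: real assumes "a \<le> b" "x \<le> (a+b)/2" shows "(x-a)^2 \<le> (x-b)^2"
proof -
  have "(x-b)^2 - (x-a)^2 = (b-a)*(a+b-2*x)" by (simp add: power2_eq_square algebra_simps)
  moreover have "0 \<le> (b-a)*(a+b-2*x)" using assms by simp
  ultimately show ?thesis by simp
qed

lemma sq_ge1: fixes c x a :: real assumes "0 \<le> c" "c \<le> x - a" shows "c^2 \<le> (x-a)^2"
  using power_mono[OF assms(2) assms(1), of 2] by simp

lemma sq_ge2: fixes c x a :: real assumes "0 \<le> c" "c \<le> a - x" shows "c^2 \<le> (x-a)^2"
  using power_mono[OF assms(2) assms(1), of 2] by (simp add: power2_commute)

lemma F3_ge: assumes "g \<le> (x-a1)^2" "g \<le> (x-a2)^2" "g \<le> (x-a3)^2" shows "g \<le> F3 a1 a2 a3 x"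
  using assms unfolding F3_def by simp

lemma IJ1: "IJ 1 G = (\<integral>\<^sup>+x. indicator {0..1/3} x * G x \<partial>lborel)" unfolding IJ_def J1 ..
lemma IJ2: "IJ 2 G = (\<integral>\<^sup>+x. indicator {2/3..7/9} x * G x \<partial>lborel)" unfolding IJ_def J2 ..

lemma combine:
  assumes "ennreal D = ennreal (3/2) * IL + ennreal (9/4) * IM + IC"
    "ennreal xl \<le> IL" "ennreal xm \<le> IM" "ennreal xc \<le> IC" "0 \<le> xl" "0 \<le> xm" "0 \<le> xc" "0 \<le> D"
  shows "3/2*xl + 9/4*xm + xc \<le> D"
proof -
  have "ennreal (3/2*xl + 9/4*xm + xc) = ennreal (3/2) * ennreal xl + ennreal (9/4) * ennreal xm + ennreal xc"
    using assms by (simp add: ennreal_plus[symmetric] ennreal_mult[symmetric] del: ennreal_plus)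
  also have "\<dots> \<le> ennreal (3/2) * IL + ennreal (9/4) * IM + IC"
    using assms by (intro add_mono mult_left_mono) auto
  also have "\<dots> = ennreal D" using assms(1) by simp
  finally show ?thesis using assms(8) ennreal_le_iff by blast
qed




lemma F3_le1: "F3 a1 a2 a3 x \<le> (x-a1)^2" unfolding F3_def by simp
lemma F3_le2: "F3 a1 a2 a3 x \<le> (x-a2)^2" unfolding F3_def by simp
lemma F3_le3: "F3 a1 a2 a3 x \<le> (x-a3)^2" unfolding F3_def by simp

abbreviation "Fs x \<equiv> F3 (1/6) (13/18) (17/18) x"

lemma Fs_L: assumes "0 \<le> x" "x \<le> 1/3" shows "Fs x = (x-1/6)^2"
proof (rule antisym[OF F3_le1 F3_ge])
  show "(x - 1/6)^2 \<le> (x - 13/18)^2" by (rule closer') (use assms in auto)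
  show "(x - 1/6)^2 \<le> (x - 17/18)^2" by (rule closer') (use assms in auto)
qed simp

lemma Fs_M: assumes "2/3 \<le> x" "x \<le> 7/9" shows "Fs x = (x-13/18)^2"
proof (rule antisym[OF F3_le2 F3_ge])
  show "(x - 13/18)^2 \<le> (x - 1/6)^2" by (rule closer) (use assms in auto)
  show "(x - 13/18)^2 \<le> (x - 17/18)^2" by (rule closer') (use assms in auto)
qed simp

lemma Fs_C: assumes "8/9 \<le> x" "x \<le> 1" shows "Fs x = (x-17/18)^2"
proof (rule antisym[OF F3_le3 F3_ge])
  show "(x - 17/18)^2 \<le> (x - 1/6)^2" by (rule closer) (use assms in auto)
  show "(x - 17/18)^2 \<le> (x - 13/18)^2" by (rule closer) (use assms in auto)
qed simp

lemma Vstar: "distortion P {1/6, 13/18, 17/18} = 29/5508"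
proof -
  let ?F = "\<lambda>x. ennreal (Fs x)"
  have h1: "IJ 1 ?F = ennreal (((1/3 - 1/6)^3 - (0 - 1/6)^3)/3)"
  proof -
    have "IJ 1 ?F = (\<integral>\<^sup>+x. indicator {0..1/3} x * ennreal ((x-1/6)^2) \<partial>lborel)"
      unfolding IJ1 by (intro nn_integral_cong) (auto simp: indicator_def Fs_L)
    also have "\<dots> = ennreal (((1/3 - 1/6)^3 - (0 - 1/6)^3)/3)" by (rule int_sq) simp
    finally show ?thesis .
  qed
  have h2: "IJ 2 ?F = ennreal (((7/9 - 13/18)^3 - (2/3 - 13/18)^3)/3)"
  proof -
    have "IJ 2 ?F = (\<integral>\<^sup>+x. indicator {2/3..7/9} x * ennreal ((x-13/18)^2) \<partial>lborel)"
      unfolding IJ2 by (intro nn_integral_cong) (auto simp: indicator_def Fs_M)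
    also have "\<dots> = ennreal (((7/9 - 13/18)^3 - (2/3 - 13/18)^3)/3)" by (rule int_sq) simp
    finally show ?thesis .
  qed
  have h3: "CI ?F = ennreal (25/66096 + (17/18-17/18)^2/4)"
  proof -
    have "CI ?F = CI (\<lambda>x. ennreal ((x - 17/18)^2))"
      by (intro antisym CI_mono) (auto simp: Fs_C)
    then show ?thesis using CI_sq[of "17/18"] by simp
  qed
  have "ennreal (distortion P {1/6, 13/18, 17/18}) = ennreal (29/5508)"
    unfolding dist3_enn h1 h2 h3 by (simp add: ennreal_mult[symmetric] ennreal_plus[symmetric] power3_eq_cube del: ennreal_plus)
  then show ?thesis using dist_nonneg[of "{1/6, 13/18, 17/18::real}" P] by simp
qed




lemma cube_id: fixes l r a :: real
  shows "((r-a)^3 - (l-a)^3)/3 = (r-l)^3/12 + (r-l)*(a-(l+r)/2)^2"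
  by (simp add: power2_eq_square power3_eq_cube field_simps)

lemma cube_nonneg: fixes l r a :: real assumes "l \<le> r" shows "0 \<le> ((r-a)^3 - (l-a)^3)/3"
  using power_mono_odd[of 3 "l-a" "r-a"] assms by simp

lemma t1: fixes a :: real shows "(a-13/18)^2 + (a-17/18)^2 = 2*(a-5/6)^2 + 2/81"
  by (simp add: power2_eq_square field_simps)

lemma t2: fixes a :: real shows "(a-13/18)^2/8 + (a-7/9)^2/8 + (a-17/18)^2/4 = (a-61/72)^2/2 + 51/10368"
  by (simp add: power2_eq_square field_simps)

lemma t3: fixes a :: real shows "(a-7/9)^2/8 + (a-17/18)^2/4 = 3*(a-8/9)^2/8 + 1/432"
  by (simp add: power2_eq_square field_simps)

lemma t4: fixes a :: real assumes "-1/2 \<le> a"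
  shows "3/2 * (((a+1/2)/2-a)^3 - (0-a)^3)/3 + 3/2*((1/3-1/2)^3 - ((a+1/2)/2-1/2)^3)/3 = 1/216 + (1/6-a)^2*(5/2+3*a)/8"
  by (simp add: power2_eq_square power3_eq_cube field_simps)




context
  fixes a1 a2 a3 D :: real
  assumes o12: "a1 < a2" and o23: "a2 < a3"
    and hD: "ennreal D = ennreal (3/2) * IJ 1 (\<lambda>x. ennreal (F3 a1 a2 a3 x)) + ennreal (9/4) * IJ 2 (\<lambda>x. ennreal (F3 a1 a2 a3 x)) + CI (\<lambda>x. ennreal (F3 a1 a2 a3 x))"
    and D0: "0 \<le> D" and DV: "D \<le> 29/5508"
begin

abbreviation "FF \<equiv> (\<lambda>x. ennreal (F3 a1 a2 a3 x))"

lemma Lsq: assumes "\<And>x. 0 \<le> x \<Longrightarrow> x \<le> 1/3 \<Longrightarrow> (x-a)^2 \<le> F3 a1 a2 a3 x"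
  shows "ennreal (((1/3-a)^3 - (0-a)^3)/3) \<le> IJ 1 FF"
  unfolding IJ1 by (rule lb_sq) (use assms in auto)

lemma Lc: assumes "0 \<le> k" "\<And>x. 0 \<le> x \<Longrightarrow> x \<le> 1/3 \<Longrightarrow> k \<le> F3 a1 a2 a3 x"
  shows "ennreal (k * (1/3 - 0)) \<le> IJ 1 FF"
  unfolding IJ1 by (rule lb_const) (use assms in auto)

lemma Msq: assumes "\<And>x. 2/3 \<le> x \<Longrightarrow> x \<le> 7/9 \<Longrightarrow> (x-a)^2 \<le> F3 a1 a2 a3 x"
  shows "ennreal (((7/9-a)^3 - (2/3-a)^3)/3) \<le> IJ 2 FF"
  unfolding IJ2 by (rule lb_sq) (use assms in auto)

lemma Mc: assumes "0 \<le> k" "\<And>x. 2/3 \<le> x \<Longrightarrow> x \<le> 7/9 \<Longrightarrow> k \<le> F3 a1 a2 a3 x"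
  shows "ennreal (k * (7/9 - 2/3)) \<le> IJ 2 FF"
  unfolding IJ2 by (rule lb_const) (use assms in auto)

lemma Csq: assumes "\<And>x. 8/9 \<le> x \<Longrightarrow> x \<le> 1 \<Longrightarrow> (x-a)^2 \<le> F3 a1 a2 a3 x"
  shows "ennreal (25/66096 + (a-17/18)^2/4) \<le> CI FF"
  by (rule CI_lb) (use assms in auto)

lemma Lsplit: assumes "0 \<le> t" "t \<le> 1/3"
  shows "IJ 1 FF = (\<integral>\<^sup>+x. indicator {0..t} x * FF x \<partial>lborel) + (\<integral>\<^sup>+x. indicator {t..1/3} x * FF x \<partial>lborel)"
  unfolding IJ1 by (rule split_int) (use assms in auto)

lemma Msplit: assumes "2/3 \<le> t" "t \<le> 7/9"
  shows "IJ 2 FF = (\<integral>\<^sup>+x. indicator {2/3..t} x * FF x \<partial>lborel) + (\<integral>\<^sup>+x. indicator {t..7/9} x * FF x \<partial>lborel)"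
  unfolding IJ2 by (rule split_int) (use assms in auto)

lemma comb: assumes "ennreal xl \<le> IJ 1 FF" "ennreal xm \<le> IJ 2 FF" "ennreal xc \<le> CI FF" "0 \<le> xl" "0 \<le> xm" "0 \<le> xc"
  shows "3/2*xl + 9/4*xm + xc \<le> D"
  by (rule combine[OF hD assms D0])

lemma T1: assumes "a3 \<le> 1/2" shows False
proof -
  have m: "ennreal ((1/6)^2 * (7/9 - 2/3)) \<le> IJ 2 FF"
    by (rule Mc) (use assms o12 o23 in \<open>auto intro!: F3_ge sq_ge1\<close>)
  have "3/2*0 + 9/4*((1/6)^2 * (7/9 - 2/3)) + 0 \<le> D" by (rule comb) (use m in auto)
  then show False using DV by (simp add: power2_eq_square)
qed

lemma T2: assumes "1/2 \<le> a1" shows False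
proof -
  have l: "ennreal ((1/6)^2 * (1/3 - 0)) \<le> IJ 1 FF"
    by (rule Lc) (use assms o12 o23 in \<open>auto intro!: F3_ge sq_ge2\<close>)
  have "3/2*((1/6)^2 * (1/3 - 0)) + 9/4*0 + 0 \<le> D" by (rule comb) (use l in auto)
  then show False using DV by (simp add: power2_eq_square)
qed

lemma cM: fixes a :: real shows "((7/9-a)^3 - (2/3-a)^3)/3 = 1/8748 + (a-13/18)^2/9"
  by (simp add: power2_eq_square power3_eq_cube field_simps)

lemma cL: fixes a :: real shows "((1/3-a)^3 - (0-a)^3)/3 = 1/324 + (a-1/6)^2/3"
  by (simp add: power2_eq_square power3_eq_cube field_simps)

lemma small_sq: fixes y d :: real assumes "\<bar>y\<bar> \<le> d" shows "y^2 \<le> d^2"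
  using assms by (metis abs_ge_zero power2_abs power_mono)

lemma T3: assumes "a2 \<le> 1/2" "1/2 < a3" shows False
proof -
  consider "a3 \<le> 5/6" | "5/6 < a3" "a3 < 8/9" | "8/9 \<le> a3" "a3 < 17/18" | "17/18 \<le> a3" by linarith
  then show False
  proof cases
    case 1
    have m: "ennreal (((7/9-a3)^3 - (2/3-a3)^3)/3) \<le> IJ 2 FF"
    proof (rule Msq)
      fix x :: real assume x: "2/3 \<le> x" "x \<le> 7/9"
      show "(x-a3)^2 \<le> F3 a1 a2 a3 x"
      proof (rule F3_ge)
        show "(x-a3)^2 \<le> (x-a1)^2" by (rule closer) (use x 1 assms o12 o23 in auto)
        show "(x-a3)^2 \<le> (x-a2)^2" by (rule closer) (use x 1 assms o12 o23 in auto)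
      qed simp
    qed
    have c: "ennreal (25/66096 + (a3-17/18)^2/4) \<le> CI FF"
    proof (rule Csq)
      fix x :: real assume x: "8/9 \<le> x" "x \<le> 1"
      show "(x-a3)^2 \<le> F3 a1 a2 a3 x"
      proof (rule F3_ge)
        show "(x-a3)^2 \<le> (x-a1)^2" by (rule closer) (use x 1 assms o12 o23 in auto)
        show "(x-a3)^2 \<le> (x-a2)^2" by (rule closer) (use x 1 assms o12 o23 in auto)
      qed simp
    qed
    have "3/2*0 + 9/4*(((7/9-a3)^3 - (2/3-a3)^3)/3) + (25/66096 + (a3-17/18)^2/4) \<le> D"
      by (rule comb) (use m c cube_nonneg in auto)
    then show False using DV cM[of a3] t1[of a3] zero_le_power2[of "a3-5/6"] by linarith
  next
    case 2
    have m1: "ennreal ((a3-13/18)^2 * (13/18 - 2/3)) \<le> (\<integral>\<^sup>+x. indicator {2/3..13/18} x * FF x \<partial>lborel)"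
    proof (rule lb_const)
      fix x :: real assume x: "2/3 \<le> x" "x \<le> 13/18"
      have "(a3-13/18)^2 \<le> (1/6)^2" by (rule small_sq) (use 2 in auto)
      moreover have "(1/6)^2 \<le> (x-a1)^2" "(1/6)^2 \<le> (x-a2)^2"
        by (rule sq_ge1, use x assms o12 in auto)+
      moreover have "(a3-13/18)^2 \<le> (x-a3)^2" by (rule sq_ge2) (use x 2 in auto)
      ultimately show "(a3-13/18)^2 \<le> F3 a1 a2 a3 x" by (intro F3_ge) auto
    qed auto
    have m2: "ennreal ((a3-7/9)^2 * (7/9 - 13/18)) \<le> (\<integral>\<^sup>+x. indicator {13/18..7/9} x * FF x \<partial>lborel)"
    proof (rule lb_const)
      fix x :: real assume x: "13/18 \<le> x" "x \<le> 7/9"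
      have "(a3-7/9)^2 \<le> (1/6)^2" by (rule small_sq) (use 2 in auto)
      moreover have "(1/6)^2 \<le> (x-a1)^2" "(1/6)^2 \<le> (x-a2)^2"
        by (rule sq_ge1, use x assms o12 in auto)+
      moreover have "(a3-7/9)^2 \<le> (x-a3)^2" by (rule sq_ge2) (use x 2 in auto)
      ultimately show "(a3-7/9)^2 \<le> F3 a1 a2 a3 x" by (intro F3_ge) auto
    qed auto
    have m: "ennreal ((a3-13/18)^2 * (13/18 - 2/3) + (a3-7/9)^2 * (7/9 - 13/18)) \<le> IJ 2 FF"
      unfolding Msplit[of "13/18", simplified]
      using add_mono[OF m1 m2] by (simp add: ennreal_plus[symmetric] del: ennreal_plus)
    have c: "ennreal (25/66096 + (a3-17/18)^2/4) \<le> CI FF"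
    proof (rule Csq)
      fix x :: real assume x: "8/9 \<le> x" "x \<le> 1"
      show "(x-a3)^2 \<le> F3 a1 a2 a3 x"
      proof (rule F3_ge)
        show "(x-a3)^2 \<le> (x-a1)^2" by (rule closer) (use x 2 assms o12 o23 in auto)
        show "(x-a3)^2 \<le> (x-a2)^2" by (rule closer) (use x 2 assms o12 o23 in auto)
      qed simp
    qed
    have "3/2*0 + 9/4*((a3-13/18)^2 * (13/18 - 2/3) + (a3-7/9)^2 * (7/9 - 13/18)) + (25/66096 + (a3-17/18)^2/4) \<le> D"
      by (rule comb) (use m c in auto)
    then have "(a3-13/18)^2/8 + (a3-7/9)^2/8 + 25/66096 + (a3-17/18)^2/4 \<le> D"
      by (simp add: field_simps)
    then show False using DV t2[of a3] zero_le_power2[of "a3-61/72"] by linarith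
  next
    case 3
    have m1: "ennreal ((1/6)^2 * (13/18 - 2/3)) \<le> (\<integral>\<^sup>+x. indicator {2/3..13/18} x * FF x \<partial>lborel)"
    proof (rule lb_const)
      fix x :: real assume x: "2/3 \<le> x" "x \<le> 13/18"
      have "(1/6)^2 \<le> (x-a1)^2" "(1/6)^2 \<le> (x-a2)^2"
        by (rule sq_ge1, use x assms o12 in auto)+
      moreover have "(1/6)^2 \<le> (x-a3)^2" by (rule sq_ge2) (use x 3 in auto)
      ultimately show "(1/6)^2 \<le> F3 a1 a2 a3 x" by (intro F3_ge) auto
    qed auto
    have m2: "ennreal ((a3-7/9)^2 * (7/9 - 13/18)) \<le> (\<integral>\<^sup>+x. indicator {13/18..7/9} x * FF x \<partial>lborel)"
    proof (rule lb_const)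
      fix x :: real assume x: "13/18 \<le> x" "x \<le> 7/9"
      have "(a3-7/9)^2 \<le> (1/6)^2" by (rule small_sq) (use 3 in auto)
      moreover have "(1/6)^2 \<le> (x-a1)^2" "(1/6)^2 \<le> (x-a2)^2"
        by (rule sq_ge1, use x assms o12 in auto)+
      moreover have "(a3-7/9)^2 \<le> (x-a3)^2" by (rule sq_ge2) (use x 3 in auto)
      ultimately show "(a3-7/9)^2 \<le> F3 a1 a2 a3 x" by (intro F3_ge) auto
    qed auto
    have m: "ennreal ((1/6)^2 * (13/18 - 2/3) + (a3-7/9)^2 * (7/9 - 13/18)) \<le> IJ 2 FF"
      unfolding Msplit[of "13/18", simplified]
      using add_mono[OF m1 m2] by (simp add: ennreal_plus[symmetric] del: ennreal_plus)
    have c: "ennreal (25/66096 + (a3-17/18)^2/4) \<le> CI FF"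
    proof (rule Csq)
      fix x :: real assume x: "8/9 \<le> x" "x \<le> 1"
      show "(x-a3)^2 \<le> F3 a1 a2 a3 x"
      proof (rule F3_ge)
        show "(x-a3)^2 \<le> (x-a1)^2" by (rule closer) (use x 3 assms o12 o23 in auto)
        show "(x-a3)^2 \<le> (x-a2)^2" by (rule closer) (use x 3 assms o12 o23 in auto)
      qed simp
    qed
    have "3/2*0 + 9/4*((1/6)^2 * (13/18 - 2/3) + (a3-7/9)^2 * (7/9 - 13/18)) + (25/66096 + (a3-17/18)^2/4) \<le> D"
      by (rule comb) (use m c in auto)
    then have "1/288 + (a3-7/9)^2/8 + 25/66096 + (a3-17/18)^2/4 \<le> D"
      by (simp add: field_simps power2_eq_square[of "1/6"])
    then show False using DV t3[of a3] zero_le_power2[of "a3-8/9"] by linarith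
  next
    case 4
    have m: "ennreal ((1/6)^2 * (7/9 - 2/3)) \<le> IJ 2 FF"
    proof (rule Mc)
      fix x :: real assume x: "2/3 \<le> x" "x \<le> 7/9"
      have "(1/6)^2 \<le> (x-a1)^2" "(1/6)^2 \<le> (x-a2)^2"
        by (rule sq_ge1, use x assms o12 in auto)+
      moreover have "(1/6)^2 \<le> (x-a3)^2" by (rule sq_ge2) (use x 4 in auto)
      ultimately show "(1/6)^2 \<le> F3 a1 a2 a3 x" by (intro F3_ge) auto
    qed auto
    have "3/2*0 + 9/4*((1/6)^2 * (7/9 - 2/3)) + 0 \<le> D" by (rule comb) (use m in auto)
    then show False using DV by (simp add: power2_eq_square)
  qed
qed

lemma L_part: assumes "a1 < 1/2" "1/2 < a2"
  shows "\<exists>xl. ennreal xl \<le> IJ 1 FF \<and> 0 \<le> xl \<and> 1/216 \<le> 3/2*xl \<and> (3/2*xl \<le> 1/216 \<longrightarrow> a1 = 1/6)"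
proof -
  consider "1/6 \<le> a1" | "-1/2 \<le> a1" "a1 < 1/6" | "a1 < -1/2" by linarith
  then show ?thesis
  proof cases
    case 1
    have l: "ennreal (((1/3-a1)^3 - (0-a1)^3)/3) \<le> IJ 1 FF"
    proof (rule Lsq)
      fix x :: real assume x: "0 \<le> x" "x \<le> 1/3"
      show "(x-a1)^2 \<le> F3 a1 a2 a3 x"
      proof (rule F3_ge)
        show "(x-a1)^2 \<le> (x-a2)^2" by (rule closer') (use x 1 assms o12 o23 in auto)
        show "(x-a1)^2 \<le> (x-a3)^2" by (rule closer') (use x 1 assms o12 o23 in auto)
      qed simp
    qed
    show ?thesis
    proof (intro exI conjI impI)
      show "ennreal (((1/3-a1)^3 - (0-a1)^3)/3) \<le> IJ 1 FF" by (rule l)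
      show "0 \<le> ((1/3-a1)^3 - (0-a1)^3)/3" by (rule cube_nonneg) simp
      show "1/216 \<le> 3/2*(((1/3-a1)^3 - (0-a1)^3)/3)"
        using cL[of a1] zero_le_power2[of "a1-1/6"] by linarith
      assume "3/2*(((1/3-a1)^3 - (0-a1)^3)/3) \<le> 1/216"
      then have "(a1-1/6)^2 \<le> 0" using cL[of a1] by linarith
      then show "a1 = 1/6" by simp
    qed
  next
    case 2
    define t where "t = (a1+1/2)/2"
    have t: "0 \<le> t" "t \<le> 1/3" using 2 unfolding t_def by auto
    have i1: "ennreal (((t-a1)^3 - (0-a1)^3)/3) \<le> (\<integral>\<^sup>+x. indicator {0..t} x * FF x \<partial>lborel)"
    proof (rule lb_sq)
      fix x :: real assume x: "0 \<le> x" "x \<le> t"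
      show "(x-a1)^2 \<le> F3 a1 a2 a3 x"
      proof (rule F3_ge)
        show "(x-a1)^2 \<le> (x-a2)^2" by (rule closer') (use x t_def assms o12 o23 in auto)
        show "(x-a1)^2 \<le> (x-a3)^2" by (rule closer') (use x t_def assms o12 o23 in auto)
      qed simp
    qed (use t in auto)
    have i2: "ennreal (((1/3-1/2)^3 - (t-1/2)^3)/3) \<le> (\<integral>\<^sup>+x. indicator {t..1/3} x * FF x \<partial>lborel)"
    proof (rule lb_sq)
      fix x :: real assume x: "t \<le> x" "x \<le> 1/3"
      show "(x-1/2)^2 \<le> F3 a1 a2 a3 x"
      proof (rule F3_ge)
        show "(x-1/2)^2 \<le> (x-a1)^2" by (rule closer) (use x t_def assms in auto)
        show "(x-1/2)^2 \<le> (x-a2)^2" by (rule closer') (use x t_def assms o12 o23 in auto)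
        show "(x-1/2)^2 \<le> (x-a3)^2" by (rule closer') (use x t_def assms o12 o23 in auto)
      qed
    qed (use t in auto)
    have n1: "0 \<le> ((t-a1)^3 - (0-a1)^3)/3" by (rule cube_nonneg) (use t in auto)
    have n2: "0 \<le> ((1/3-1/2)^3 - (t-1/2)^3)/3" by (rule cube_nonneg) (use t in auto)
    define xl where "xl = ((t-a1)^3 - (0-a1)^3)/3 + ((1/3-1/2)^3 - (t-1/2)^3)/3"
    have l: "ennreal xl \<le> IJ 1 FF"
      unfolding Lsplit[OF t] xl_def using add_mono[OF i1 i2] n1 n2
      by (simp add: ennreal_plus[symmetric] del: ennreal_plus)
    have e: "3/2*xl = 1/216 + (1/6-a1)^2*(5/2+3*a1)/8"
      unfolding xl_def t_def using t4[of a1] 2 by (simp add: algebra_simps)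
    have p: "0 < (1/6-a1)^2*(5/2+3*a1)/8" using 2 by (intro divide_pos_pos mult_pos_pos) auto
    show ?thesis
    proof (intro exI conjI impI)
      show "ennreal xl \<le> IJ 1 FF" by (rule l)
      show "0 \<le> xl" unfolding xl_def using n1 n2 by simp
      show "1/216 \<le> 3/2*xl" using e p by linarith
      assume "3/2*xl \<le> 1/216"
      then show "a1 = 1/6" using e p by linarith
    qed
  next
    case 3
    have l: "ennreal (((1/3-1/2)^3 - (0-1/2)^3)/3) \<le> IJ 1 FF"
    proof (rule Lsq)
      fix x :: real assume x: "0 \<le> x" "x \<le> 1/3"
      show "(x-1/2)^2 \<le> F3 a1 a2 a3 x"
      proof (rule F3_ge)
        show "(x-1/2)^2 \<le> (x-a1)^2" by (rule closer) (use x 3 in auto)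
        show "(x-1/2)^2 \<le> (x-a2)^2" by (rule closer') (use x assms o12 o23 in auto)
        show "(x-1/2)^2 \<le> (x-a3)^2" by (rule closer') (use x assms o12 o23 in auto)
      qed
    qed
    show ?thesis
    proof (intro exI conjI impI)
      show "ennreal (((1/3-1/2)^3 - (0-1/2)^3)/3) \<le> IJ 1 FF" by (rule l)
      show "0 \<le> ((1/3-1/2::real)^3 - (0-1/2)^3)/3" by (simp add: power3_eq_cube)
      show "1/216 \<le> 3/2*(((1/3-1/2::real)^3 - (0-1/2)^3)/3)" by (simp add: power3_eq_cube)
      assume "3/2*(((1/3-1/2::real)^3 - (0-1/2)^3)/3) \<le> 1/216"
      then show "a1 = 1/6" by (simp add: power3_eq_cube)
    qed
  qed
qed

lemma H_part: assumes "a1 < 1/2" "1/2 < a2"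
  shows "\<exists>xm xc. ennreal xm \<le> IJ 2 FF \<and> ennreal xc \<le> CI FF \<and> 0 \<le> xm \<and> 0 \<le> xc \<and>
     1/3888 + 25/66096 \<le> 9/4*xm + xc \<and> (9/4*xm + xc \<le> 1/3888 + 25/66096 \<longrightarrow> a2 = 13/18 \<and> a3 = 17/18)"
proof -
  have Cnn: "0 \<le> 25/66096 + (a-17/18)^2/4" for a :: real by simp
  have strict: "\<exists>xm xc. ennreal xm \<le> IJ 2 FF \<and> ennreal xc \<le> CI FF \<and> 0 \<le> xm \<and> 0 \<le> xc \<and>
     1/3888 + 25/66096 \<le> 9/4*xm + xc \<and> (9/4*xm + xc \<le> 1/3888 + 25/66096 \<longrightarrow> a2 = 13/18 \<and> a3 = 17/18)"
    if "ennreal xm \<le> IJ 2 FF" "ennreal xc \<le> CI FF" "0 \<le> xm" "0 \<le> xc" "1/3888 + 25/66096 < 9/4*xm + xc" for xm xc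
    using that by (intro exI[of _ xm] exI[of _ xc]) auto
  consider "a3 \<le> 5/6" | "5/6 \<le> a2" | "a2 < 5/6" "5/6 < a3" by linarith
  then show ?thesis
  proof cases
    case 1
    have c: "ennreal (25/66096 + (5/6-17/18)^2/4) \<le> CI FF"
    proof (rule Csq)
      fix x :: real assume x: "8/9 \<le> x" "x \<le> 1"
      have "(x-5/6)^2 \<le> (x-a1)^2" "(x-5/6)^2 \<le> (x-a2)^2" "(x-5/6)^2 \<le> (x-a3)^2"
        by (rule sq_ge1, use x 1 assms o12 o23 in auto)+
      then show "(x-5/6)^2 \<le> F3 a1 a2 a3 x" by (intro F3_ge)
    qed
    show ?thesis by (rule strict[of 0 "25/66096 + (5/6-17/18)^2/4"]) (use c in \<open>auto simp: power2_eq_square\<close>)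
  next
    case 2
    have m: "ennreal ((1/18)^2 * (7/9 - 2/3)) \<le> IJ 2 FF"
    proof (rule Mc)
      fix x :: real assume x: "2/3 \<le> x" "x \<le> 7/9"
      have "(1/18)^2 \<le> (x-a1)^2" by (rule sq_ge1) (use x assms in auto)
      moreover have "(1/18)^2 \<le> (x-a2)^2" "(1/18)^2 \<le> (x-a3)^2"
        by (rule sq_ge2, use x 2 o23 in auto)+
      ultimately show "(1/18)^2 \<le> F3 a1 a2 a3 x" by (intro F3_ge)
    qed auto
    show ?thesis by (rule strict[OF m, of 0]) (auto simp: power2_eq_square)
  next
    case 3
    note ac = 3
    define b where "b = (a2+a3)/2"
    consider "7/9 \<le> b" "b \<le> 8/9" | "b < 7/9" | "8/9 < b" by linarith
    then show ?thesis
    proof cases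
      case 1
      have m: "ennreal (((7/9-a2)^3 - (2/3-a2)^3)/3) \<le> IJ 2 FF"
      proof (rule Msq)
        fix x :: real assume x: "2/3 \<le> x" "x \<le> 7/9"
        show "(x-a2)^2 \<le> F3 a1 a2 a3 x"
        proof (rule F3_ge)
          show "(x-a2)^2 \<le> (x-a1)^2" by (rule closer) (use x ac assms o12 in auto)
          show "(x-a2)^2 \<le> (x-a3)^2" by (rule closer') (use x 1 b_def o23 in auto)
        qed simp
      qed
      have c: "ennreal (25/66096 + (a3-17/18)^2/4) \<le> CI FF"
      proof (rule Csq)
        fix x :: real assume x: "8/9 \<le> x" "x \<le> 1"
        show "(x-a3)^2 \<le> F3 a1 a2 a3 x"
        proof (rule F3_ge)
          show "(x-a3)^2 \<le> (x-a1)^2" by (rule closer) (use x 1 b_def o12 o23 in auto)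
          show "(x-a3)^2 \<le> (x-a2)^2" by (rule closer) (use x 1 b_def o23 in auto)
        qed simp
      qed
      show ?thesis
      proof (intro exI conjI)
        show "ennreal (((7/9-a2)^3 - (2/3-a2)^3)/3) \<le> IJ 2 FF" by (rule m)
        show "ennreal (25/66096 + (a3-17/18)^2/4) \<le> CI FF" by (rule c)
        show "0 \<le> ((7/9-a2)^3 - (2/3-a2)^3)/3" by (rule cube_nonneg) simp
        show "0 \<le> 25/66096 + (a3-17/18)^2/4" by simp
        show "1/3888 + 25/66096 \<le> 9/4*(((7/9-a2)^3 - (2/3-a2)^3)/3) + (25/66096 + (a3-17/18)^2/4)"
          using cM[of a2] zero_le_power2[of "a2-13/18"] zero_le_power2[of "a3-17/18"] by linarith
        show "9/4*(((7/9-a2)^3 - (2/3-a2)^3)/3) + (25/66096 + (a3-17/18)^2/4) \<le> 1/3888 + 25/66096 \<longrightarrow> a2 = 13/18 \<and> a3 = 17/18"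
        proof
          assume h: "9/4*(((7/9-a2)^3 - (2/3-a2)^3)/3) + (25/66096 + (a3-17/18)^2/4) \<le> 1/3888 + 25/66096"
          have "(a2-13/18)^2 \<le> 0" "(a3-17/18)^2 \<le> 0"
            using h cM[of a2] zero_le_power2[of "a2-13/18"] zero_le_power2[of "a3-17/18"] by linarith+
          then show "a2 = 13/18 \<and> a3 = 17/18" by simp
        qed
      qed
    next
      case 2
      have b: "2/3 \<le> b" "b \<le> 7/9" using 2 ac assms unfolding b_def by auto
      have i1: "ennreal (((b-a2)^3 - (2/3-a2)^3)/3) \<le> (\<integral>\<^sup>+x. indicator {2/3..b} x * FF x \<partial>lborel)"
      proof (rule lb_sq)
        fix x :: real assume x: "2/3 \<le> x" "x \<le> b"
        show "(x-a2)^2 \<le> F3 a1 a2 a3 x"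
        proof (rule F3_ge)
          show "(x-a2)^2 \<le> (x-a1)^2" by (rule closer) (use x ac assms o12 in auto)
          show "(x-a2)^2 \<le> (x-a3)^2" by (rule closer') (use x b_def o23 in auto)
        qed simp
      qed (use b in auto)
      have i2: "ennreal ((1/18)^2 * (7/9 - b)) \<le> (\<integral>\<^sup>+x. indicator {b..7/9} x * FF x \<partial>lborel)"
      proof (rule lb_const)
        fix x :: real assume x: "b \<le> x" "x \<le> 7/9"
        have "(1/18)^2 \<le> (x-a1)^2" by (rule sq_ge1) (use x b assms in auto)
        moreover have q: "(1/18)^2 \<le> (x-a3)^2" by (rule sq_ge2) (use x ac in auto)
        moreover have "(x-a3)^2 \<le> (x-a2)^2" by (rule closer) (use x b_def o23 in auto)
        ultimately show "(1/18)^2 \<le> F3 a1 a2 a3 x" by (intro F3_ge) auto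
      qed (use b in auto)
      have n1: "0 \<le> ((b-a2)^3 - (2/3-a2)^3)/3" by (rule cube_nonneg) (use b in auto)
      have n2: "0 \<le> (1/18)^2 * (7/9 - b)" using b by simp
      define xm where "xm = ((b-a2)^3 - (2/3-a2)^3)/3 + (1/18)^2 * (7/9 - b)"
      have m: "ennreal xm \<le> IJ 2 FF"
        unfolding Msplit[OF b] xm_def using add_mono[OF i1 i2] n1 n2
        by (simp add: ennreal_plus[symmetric] del: ennreal_plus)
      have c: "ennreal (25/66096 + (a3-17/18)^2/4) \<le> CI FF"
      proof (rule Csq)
        fix x :: real assume x: "8/9 \<le> x" "x \<le> 1"
        show "(x-a3)^2 \<le> F3 a1 a2 a3 x"
        proof (rule F3_ge)
          show "(x-a3)^2 \<le> (x-a1)^2" by (rule closer) (use x 2 b_def o12 o23 in auto)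
          show "(x-a3)^2 \<le> (x-a2)^2" by (rule closer) (use x 2 b_def o23 in auto)
        qed simp
      qed
      have cu: "((b-a2)^3 - (2/3-a2)^3)/3 \<ge> (b-2/3)^3/12"
      proof -
        have "0 \<le> (b-2/3)*(a2-(2/3+b)/2)^2" using b by simp
        then show ?thesis using cube_id[of b a2 "2/3"] by linarith
      qed
      have idd: "9/4*((b-2/3)^3/12 + (1/18)^2*(7/9-b)) - 1/3888 = 3/16*(7/9-b)^2*(1/3-(7/9-b))"
        by (simp add: power2_eq_square power3_eq_cube field_simps)
      have pos: "0 < 3/16*(7/9-b)^2*(1/3-(7/9-b))" using 2 b by (intro mult_pos_pos) auto
      have mm: "9/4*((b-2/3)^3/12 + (1/18)^2*(7/9-b)) \<le> 9/4*xm"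
        unfolding xm_def by (intro mult_left_mono add_right_mono) (use cu in auto)
      have "1/3888 < 9/4*xm" using mm idd pos by linarith
      then have "1/3888 + 25/66096 < 9/4*xm + (25/66096 + (a3-17/18)^2/4)"
        using zero_le_power2[of "a3-17/18"] by linarith
      moreover have "0 \<le> xm" unfolding xm_def using n1 n2 by simp
      ultimately show ?thesis by (intro strict[OF m c]) auto
    next
      case 3
      have a3b: "17/18 < a3" using 3 ac unfolding b_def by (simp add: field_simps)
      show ?thesis
      proof (cases "a2 \<le> 7/9")
        case True
        define c where "c = min a3 1"
        have cr: "8/9 \<le> c" "c \<le> 1" using a3b unfolding c_def by auto
        have m: "ennreal (((7/9-a2)^3 - (2/3-a2)^3)/3) \<le> IJ 2 FF"
        proof (rule Msq)
          fix x :: real assume x: "2/3 \<le> x" "x \<le> 7/9"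
          show "(x-a2)^2 \<le> F3 a1 a2 a3 x"
          proof (rule F3_ge)
            show "(x-a2)^2 \<le> (x-a1)^2" by (rule closer) (use x ac assms o12 in auto)
            show "(x-a2)^2 \<le> (x-a3)^2" by (rule closer') (use x 3 b_def o23 in auto)
          qed simp
        qed
        have cc: "ennreal (25/66096 + (c-17/18)^2/4) \<le> CI FF"
        proof (rule Csq)
          fix x :: real assume x: "8/9 \<le> x" "x \<le> 1"
          have "-(1/9) \<le> x - c" "x - c \<le> 1/9" using x cr by linarith+
          then have s: "(x-c)^2 \<le> (1/9)^2" by (intro small_sq abs_leI) linarith+
          have "(1/9)^2 \<le> (x-a1)^2" "(1/9)^2 \<le> (x-a2)^2"
            by (rule sq_ge1, use x True assms o12 in auto)+
          moreover have "(x-c)^2 \<le> (x-a3)^2"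
          proof (cases "a3 \<le> 1")
            case True then show ?thesis unfolding c_def by simp
          next
            case False
            then have "(1-x)^2 \<le> (x-a3)^2" by (intro sq_ge2) (use x in auto)
            then show ?thesis using False unfolding c_def by (simp add: power2_commute)
          qed
          ultimately show "(x-c)^2 \<le> F3 a1 a2 a3 x" using s by (intro F3_ge) auto
        qed
        have gt: "0 < (a2-13/18)^2 + (c-17/18)^2"
        proof (cases "a2 = 13/18")
          case True
          then have "c = 1" using 3 unfolding c_def b_def by auto
          then show ?thesis by (simp add: add_nonneg_pos)
        next
          case False
          then have "0 < (a2-13/18)^2" by simp
          then show ?thesis by (simp add: add_pos_nonneg)
        qed
        have "1/3888 + 25/66096 < 9/4*(((7/9-a2)^3 - (2/3-a2)^3)/3) + (25/66096 + (c-17/18)^2/4)"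
          using cM[of a2] gt by linarith
        then show ?thesis
          by (intro strict[OF m cc]) (use cube_nonneg[of "2/3" "7/9" a2] in auto)
      next
        case False
        have m: "ennreal (((7/9-a2)^3 - (2/3-a2)^3)/3) \<le> IJ 2 FF"
        proof (rule Msq)
          fix x :: real assume x: "2/3 \<le> x" "x \<le> 7/9"
          show "(x-a2)^2 \<le> F3 a1 a2 a3 x"
          proof (rule F3_ge)
            show "(x-a2)^2 \<le> (x-a1)^2" by (rule closer) (use x ac assms o12 in auto)
            show "(x-a2)^2 \<le> (x-a3)^2" by (rule closer') (use x 3 b_def o23 in auto)
          qed simp
        qed
        have "(1/18)^2 \<le> (a2-13/18)^2" by (rule sq_ge1) (use False in auto)
        moreover have "(1/18::real)^2 = 1/324" by (simp add: power2_eq_square)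
        ultimately have "1/3888 + 25/66096 < 9/4*(((7/9-a2)^3 - (2/3-a2)^3)/3) + 0"
          using cM[of a2] by linarith
        then show ?thesis
          by (intro strict[OF m, of 0]) (use cube_nonneg[of "2/3" "7/9" a2] in auto)
      qed
    qed
  qed
qed

lemma T4: assumes "a1 < 1/2" "1/2 < a2" shows "a1 = 1/6 \<and> a2 = 13/18 \<and> a3 = 17/18"
proof -
  obtain xl where l: "ennreal xl \<le> IJ 1 FF" "0 \<le> xl" "1/216 \<le> 3/2*xl" "3/2*xl \<le> 1/216 \<longrightarrow> a1 = 1/6"
    using L_part[OF assms] by blast
  obtain xm xc where h: "ennreal xm \<le> IJ 2 FF" "ennreal xc \<le> CI FF" "0 \<le> xm" "0 \<le> xc"
     "1/3888 + 25/66096 \<le> 9/4*xm + xc" "9/4*xm + xc \<le> 1/3888 + 25/66096 \<longrightarrow> a2 = 13/18 \<and> a3 = 17/18"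
    using H_part[OF assms] by blast
  have "3/2*xl + 9/4*xm + xc \<le> D" by (rule comb) (use l h in auto)
  then have s: "3/2*xl + 9/4*xm + xc \<le> 1/216 + (1/3888 + 25/66096)" using DV by simp
  have "3/2*xl \<le> 1/216" using s h(5) by linarith
  moreover have "9/4*xm + xc \<le> 1/3888 + 25/66096" using s l(3) by linarith
  ultimately show ?thesis using l(4) h(6) by blast
qed

end


theorem lemma4p2:
  fixes a1 a2 a3 :: real
  assumes "optimal_set P 3 {a1, a2, a3}"
    and "a1 < a2" and "a2 < a3"
  shows "a1 = 1/6 \<and> a2 = 13/18 \<and> a3 = 17/18 \<and> quant_error P 3 = 29/5508"
proof -
  have eq: "distortion P {a1,a2,a3} = quant_error P 3" using assms(1) unfolding optimal_set_def by simp
  have "quant_error P 3 \<le> distortion P {1/6, 13/18, 17/18::real}" by (rule qe_le) auto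
  then have DV: "distortion P {a1,a2,a3} \<le> 29/5508" using eq Vstar by simp
  have D0: "0 \<le> distortion P {a1,a2,a3}" by (rule dist_nonneg) auto
  note hD = dist3_enn[of a1 a2 a3]
  have vals: "a1 = 1/6 \<and> a2 = 13/18 \<and> a3 = 17/18"
  proof -
    consider "a3 \<le> 1/2" | "1/2 \<le> a1" | "a1 < 1/2" "a2 \<le> 1/2" "1/2 < a3" | "a1 < 1/2" "1/2 < a2" by linarith
    then show ?thesis
    proof cases
      case 1 then show ?thesis using T1[OF assms(2,3) hD D0 DV] by blast
    next
      case 2 then show ?thesis using T2[OF assms(2,3) hD D0 DV] by blast
    next
      case 3 then show ?thesis using T3[OF assms(2,3) hD D0 DV] by blast
    next
      case 4 then show ?thesis using T4[OF assms(2,3) hD D0 DV] by blast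
    qed
  qed
  then have "{a1,a2,a3} = {1/6, 13/18, 17/18::real}" by (simp only:)
  then have "quant_error P 3 = 29/5508" using eq Vstar by metis
  with vals show ?thesis by simp
qed

end
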